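(* Let $G=(V,E)$ be an unweighted graph with $n$ vertices, and let $s,t\in V$. Then $$ B_{st}^{2}\leq n^{3}. $$
   Context: $L=D-A$ is the Laplacian of the unweighted graph $G$, $L^{+}$ its Moore–Penrose pseudoinverse, $L^{2+}=(L^+)^2$, and $1_v$ the indicator vector of vertex $v$. The biharmonic distance is $B_{st}=\sqrt{(1_s-1_t)^{T}L^{2+}(1_s-1_t)}$. *)

theory Defs
  imports "HOL-Analysis.Analysis"
begin

definition simple_graph :: "('n::finite \<Rightarrow> 'n \<Rightarrow> bool) \<Rightarrow> bool" where
  "simple_graph E \<longleftrightarrow> (\<forall>i j. E i j \<longrightarrow> E j i) \<and> (\<forall>i. \<not> E i i)"

definition degree :: "('n::finite \<Rightarrow> 'n \<Rightarrow> bool) \<Rightarrow> 'n \<Rightarrow> nat" where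
  "degree E i = card {j. E i j}"

definition laplacian :: "('n::finite \<Rightarrow> 'n \<Rightarrow> bool) \<Rightarrow> real^'n^'n" where
  "laplacian E = (\<chi> i j. (if i = j then real (degree E i) else 0) - (if E i j then 1 else 0))"

definition pinv :: "real^'n^'n \<Rightarrow> real^'n^'n" where
  "pinv A = (THE X. A ** X ** A = A \<and> X ** A ** X = X \<and>
                    transpose (A ** X) = A ** X \<and> transpose (X ** A) = X ** A)"

definition indic :: "'n::finite \<Rightarrow> real^'n" where
  "indic v = (\<chi> i. if i = v then 1 else 0)"

definition biharmonic_dist :: "('n::finite \<Rightarrow> 'n \<Rightarrow> bool) \<Rightarrow> 'n \<Rightarrow> 'n \<Rightarrow> real" where
  "biharmonic_dist E s t =
     (let Lp = pinv (laplacian E); x = indic s - indic t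
      in sqrt (x \<bullet> ((Lp ** Lp) *v x)))"

end

theory Submission
  imports Defs "HOL-Library.Transitive_Closure_Table"
begin

lemma penrose_unique:
  fixes A X Y :: "real^'n^'n"
  assumes x1: "A ** X ** A = A" and x2: "X ** A ** X = X"
    and x3: "transpose (A ** X) = A ** X" and x4: "transpose (X ** A) = X ** A"
  assumes y1: "A ** Y ** A = A" and y2: "Y ** A ** Y = Y"
    and y3: "transpose (A ** Y) = A ** Y" and y4: "transpose (Y ** A) = Y ** A"
  shows "Y = X"
proof -
  have a: "X = X ** A ** Y"
  proof -
    have "X = X ** (A ** X)" using x2 by (simp add: matrix_mul_assoc)
    also have "\<dots> = X ** transpose (A ** X)" using x3 by simp
    also have "\<dots> = X ** transpose X ** transpose A" by (simp add: matrix_transpose_mul matrix_mul_assoc)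
    also have "transpose A = transpose (A ** Y ** A)" using y1 by simp
    also have "X ** transpose X ** transpose (A ** Y ** A) = X ** (transpose (A ** X) ** transpose (A ** Y))"
      by (simp add: matrix_transpose_mul matrix_mul_assoc)
    also have "\<dots> = X ** ((A ** X) ** (A ** Y))" using x3 y3 by simp
    also have "\<dots> = (X ** A ** X) ** A ** Y" by (simp add: matrix_mul_assoc)
    finally show ?thesis using x2 by simp
  qed
  have b: "Y = X ** A ** Y"
  proof -
    have "Y = (Y ** A) ** Y" using y2 by (simp add: matrix_mul_assoc)
    also have "\<dots> = transpose (Y ** A) ** Y" using y4 by simp
    also have "\<dots> = transpose A ** transpose Y ** Y" by (simp add: matrix_transpose_mul matrix_mul_assoc)
    also have "transpose A = transpose (A ** X ** A)" using x1 by simp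
    also have "transpose (A ** X ** A) ** transpose Y ** Y = (transpose (X ** A) ** transpose (Y ** A)) ** Y"
      by (simp add: matrix_transpose_mul matrix_mul_assoc)
    also have "\<dots> = ((X ** A) ** (Y ** A)) ** Y" using x4 y4 by simp
    also have "\<dots> = X ** A ** (Y ** A ** Y)" by (simp add: matrix_mul_assoc)
    finally show ?thesis using y2 by simp
  qed
  show ?thesis using a b by simp
qed

lemma lap_mult: "(laplacian E *v z) $ i = (\<Sum>j\<in>UNIV. if E i j then z$i - z$j else 0)"
proof -
  have "(laplacian E *v z) $ i = (\<Sum>j\<in>UNIV. (if i = j then real (degree E i) * z$j else 0) - (if E i j then z$j else 0))"
    unfolding laplacian_def matrix_vector_mult_def by simp (intro sum.cong; auto simp: left_diff_distrib)
  also have "\<dots> = real (degree E i) * z$i - (\<Sum>j\<in>UNIV. if E i j then z$j else 0)"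
    by (simp add: sum_subtractf)
  also have "\<dots> = (\<Sum>j\<in>{j. E i j}. z$i - z$j)"
    by (simp add: degree_def sum_subtractf sum.inter_filter[symmetric])
  also have "\<dots> = (\<Sum>j\<in>UNIV. if E i j then z$i - z$j else 0)"
    by (simp add: sum.inter_filter[symmetric])
  finally show ?thesis .
qed


lemma rtrancl_path_nth:
  "rtrancl_path r x xs y \<Longrightarrow> (\<forall>i<length xs. r ((x#xs)!i) ((x#xs)!Suc i)) \<and> (x#xs)!length xs = y"
  by (induct rule: rtrancl_path.induct) (auto simp: less_Suc_eq_0_disj)

lemma sign_lemma:
  fixes z :: "real^'n"
  assumes fin: "finite C" and u: "u \<in> C" and s0: "(\<Sum>i\<in>C. z$i) = 0"
  shows "\<exists>v\<in>C. (z$u)^2 \<le> (z$u - z$v)^2"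
proof (cases "z$u \<ge> 0")
  case True
  have "\<exists>v\<in>C. z$v \<le> 0"
  proof (rule ccontr)
    assume "\<not> ?thesis"
    then have "(\<Sum>i\<in>C. z$i) > 0" using fin u by (intro sum_pos) auto
    then show False using s0 by simp
  qed
  then obtain v where "v \<in> C" "z$v \<le> 0" by blast
  moreover have "(z$u)^2 \<le> (z$u - z$v)^2"
    using True \<open>z$v \<le> 0\<close> by (intro power_mono) auto
  ultimately show ?thesis by blast
next
  case False
  have "\<exists>v\<in>C. z$v \<ge> 0"
  proof (rule ccontr)
    assume "\<not> ?thesis"
    then have "(\<Sum>i\<in>C. - z$i) > 0" using fin u by (intro sum_pos) auto
    then show False using s0 by (simp add: sum_negf)
  qed
  then obtain v where "v \<in> C" "z$v \<ge> 0" by blast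
  moreover have "(- z$u)^2 \<le> (z$v - z$u)^2"
    using False \<open>z$v \<ge> 0\<close> by (intro power_mono) auto
  ultimately show ?thesis by (metis power2_commute power2_minus)
qed

locale sgraph =
  fixes E :: "'n::finite \<Rightarrow> 'n \<Rightarrow> bool"
  assumes symE: "E i j \<Longrightarrow> E j i"
begin

lemma Eiff: "E j i = E i j" using symE by blast

definition reach where "reach = E\<^sup>*\<^sup>*"
definition R where "R i = {j. reach i j}"
definition P :: "real^'n^'n" where
  "P = (\<chi> i j. if reach i j then 1 / real (card (R i)) else 0)"

lemma reach_refl: "reach i i" by (simp add: reach_def)
lemma reach_step: "reach i j \<Longrightarrow> E j k \<Longrightarrow> reach i k"
  by (simp add: reach_def)
lemma reach_E: "E i j \<Longrightarrow> reach i j" by (simp add: reach_def)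
lemma reach_trans: "reach i j \<Longrightarrow> reach j k \<Longrightarrow> reach i k"
  by (simp add: reach_def)
lemma reach_sym: "reach i j \<Longrightarrow> reach j i"
  unfolding reach_def
  by (induct rule: rtranclp_induct) (auto intro: converse_rtranclp_into_rtranclp symE)
lemma R_eq: "reach i j \<Longrightarrow> R i = R j"
  unfolding R_def using reach_sym reach_trans by blast
lemma in_R: "i \<in> R i" by (simp add: R_def reach_refl)
lemma card_R_pos: "card (R i) > 0"
  using in_R[of i] by (auto simp: card_gt_0_iff)
lemma R_closed: "j \<in> R i \<Longrightarrow> E j k \<Longrightarrow> k \<in> R i"
  unfolding R_def using reach_step by blast

lemma Pv: "(P *v z) $ i = (\<Sum>j\<in>R i. z$j) / real (card (R i))"
proof -
  have "(P *v z) $ i = (\<Sum>j\<in>UNIV. if reach i j then z$j / real (card (R i)) else 0)"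
    unfolding P_def matrix_vector_mult_def by simp (intro sum.cong; auto)
  also have "\<dots> = (\<Sum>j\<in>R i. z$j / real (card (R i)))"
    by (simp add: R_def sum.inter_filter[symmetric])
  finally show ?thesis by (simp add: sum_divide_distrib)
qed

lemma Pv_const: "reach i k \<Longrightarrow> (P *v z) $ k = (P *v z) $ i"
  using R_eq by (simp add: Pv)

lemma sum_lap_closed:
  assumes cl: "\<forall>i\<in>C. \<forall>j. E i j \<longrightarrow> j \<in> C"
  shows "(\<Sum>i\<in>C. w i * (laplacian E *v z) $ i) = (\<Sum>i\<in>C. \<Sum>j\<in>C. if E i j then w i * (z$i - z$j) else 0)"
proof -
  have "(\<Sum>i\<in>C. w i * (laplacian E *v z) $ i) = (\<Sum>i\<in>C. \<Sum>j\<in>UNIV. if E i j then w i * (z$i - z$j) else 0)"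
    by (simp add: lap_mult sum_distrib_left if_distrib cong: if_cong)
  also have "\<dots> = (\<Sum>i\<in>C. \<Sum>j\<in>C. if E i j then w i * (z$i - z$j) else 0)"
  proof (rule sum.cong[OF refl])
    fix i assume "i \<in> C"
    show "(\<Sum>j\<in>UNIV. if E i j then w i * (z$i - z$j) else 0) = (\<Sum>j\<in>C. if E i j then w i * (z$i - z$j) else 0)"
      by (rule sum.mono_neutral_right) (use cl \<open>i \<in> C\<close> in auto)
  qed
  finally show ?thesis .
qed

lemma double_sum_sym:
  fixes f :: "'n \<Rightarrow> 'n \<Rightarrow> real"
  shows "(\<Sum>i\<in>C. \<Sum>j\<in>C. f i j) = (\<Sum>i\<in>C. \<Sum>j\<in>C. f j i)"
  by (rule sum.swap)

lemma sum_lap_zero: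
  assumes cl: "\<forall>i\<in>C. \<forall>j. E i j \<longrightarrow> j \<in> C"
  shows "(\<Sum>i\<in>C. (laplacian E *v z) $ i) = 0"
proof -
  let ?f = "\<lambda>i j. if E i j then z$i - z$j else 0"
  have "(\<Sum>i\<in>C. (laplacian E *v z) $ i) = (\<Sum>i\<in>C. \<Sum>j\<in>C. ?f i j)"
    using sum_lap_closed[OF cl, where w="\<lambda>_. 1" and z=z] by (simp only: mult_1)
  moreover have "(\<Sum>i\<in>C. \<Sum>j\<in>C. ?f i j) = (\<Sum>i\<in>C. \<Sum>j\<in>C. ?f j i)" by (rule sum.swap)
  moreover have "(\<Sum>i\<in>C. \<Sum>j\<in>C. ?f j i) = - (\<Sum>i\<in>C. \<Sum>j\<in>C. ?f i j)"
    by (simp add: sum_negf[symmetric]) (intro sum.cong refl; simp add: Eiff)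
  ultimately show ?thesis by linarith
qed

lemma energy_closed:
  assumes cl: "\<forall>i\<in>C. \<forall>j. E i j \<longrightarrow> j \<in> C"
  shows "2 * (\<Sum>i\<in>C. z$i * (laplacian E *v z) $ i) = (\<Sum>i\<in>C. \<Sum>j\<in>C. if E i j then (z$i - z$j)^2 else 0)"
proof -
  let ?f = "\<lambda>i j. if E i j then z$i * (z$i - z$j) else 0"
  have a: "(\<Sum>i\<in>C. z$i * (laplacian E *v z) $ i) = (\<Sum>i\<in>C. \<Sum>j\<in>C. ?f i j)"
    using sum_lap_closed[OF cl, where w="\<lambda>i. z$i" and z=z] by simp
  moreover have b: "(\<Sum>i\<in>C. \<Sum>j\<in>C. ?f i j) = (\<Sum>i\<in>C. \<Sum>j\<in>C. ?f j i)" by (rule sum.swap)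
  moreover have "(\<Sum>i\<in>C. \<Sum>j\<in>C. ?f i j) + (\<Sum>i\<in>C. \<Sum>j\<in>C. ?f j i) = (\<Sum>i\<in>C. \<Sum>j\<in>C. if E i j then (z$i - z$j)^2 else 0)"
    apply (simp add: sum.distrib[symmetric])
    apply (intro sum.cong refl)
    by (simp add: Eiff power2_eq_square algebra_simps)
  ultimately show ?thesis by linarith
qed

lemma LPv: "laplacian E *v (P *v z) = 0"
proof -
  have "(laplacian E *v (P *v z)) $ i = 0" for i
    unfolding lap_mult by (intro sum.neutral) (simp add: Pv_const[OF reach_E])
  then show ?thesis by (simp add: vec_eq_iff)
qed

lemma PLv: "P *v (laplacian E *v z) = 0"
proof -
  have "(P *v (laplacian E *v z)) $ i = 0" for i
    unfolding Pv using sum_lap_zero[of "R i" z] R_closed by (metis div_0)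
  then show ?thesis by (simp add: vec_eq_iff)
qed

lemma PPv: "P *v (P *v z) = P *v z"
proof -
  have "(P *v (P *v z)) $ i = (P *v z) $ i" for i
  proof -
    have "(P *v (P *v z)) $ i = (\<Sum>j\<in>R i. (P *v z) $ i) / real (card (R i))"
      unfolding Pv[of "P *v z"] by (intro arg_cong2[where f="(/)"] sum.cong refl)
        (simp add: R_def Pv_const)
    also have "\<dots> = (P *v z) $ i" proof -
      have "card (R i) \<noteq> 0" using card_R_pos[of i] by linarith
      then show ?thesis by simp
    qed
    finally show ?thesis .
  qed
  then show ?thesis by (simp add: vec_eq_iff)
qed

lemma P_sym: "transpose P = P"
  unfolding P_def transpose_def
  by (simp add: vec_eq_iff) (metis R_eq reach_sym)

lemma L_sym: "transpose (laplacian E) = laplacian E"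
  unfolding laplacian_def transpose_def
  by (simp add: vec_eq_iff) (metis symE)


abbreviation "L \<equiv> laplacian E"

lemma E_eq_of_ker:
  assumes "L *v z = 0" and "E i j" shows "z$i = z$j"
proof -
  have "(\<Sum>i\<in>UNIV. \<Sum>j\<in>UNIV. if E i j then (z$i - z$j)^2 else 0) = 0"
    using energy_closed[of UNIV z] assms(1) by simp
  then have "(\<Sum>j\<in>UNIV. if E i j then (z$i - z$j)^2 else 0) = 0"
    by (subst (asm) sum_nonneg_eq_0_iff) (auto intro!: sum_nonneg)
  then have "(if E i j then (z$i - z$j)^2 else 0) = 0"
    by (subst (asm) sum_nonneg_eq_0_iff) auto
  then show ?thesis using assms(2) by simp
qed

lemma reach_eq_of_ker:
  assumes "L *v z = 0" and "reach i j" shows "z$i = z$j"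
  using assms(2) unfolding reach_def
  by (induct rule: rtranclp_induct) (use E_eq_of_ker[OF assms(1)] in auto)

lemma ker_LP:
  assumes "(L + P) *v z = 0" shows "z = 0"
proof -
  have "P *v ((L + P) *v z) = 0" using assms by simp
  then have Pz: "P *v z = 0" by (simp add: algebra_simps PLv PPv)
  then have Lz: "L *v z = 0" using assms by (simp add: algebra_simps)
  have "z$i = 0" for i
  proof -
    have "(P *v z)$i = (\<Sum>j\<in>R i. z$i) / real (card (R i))"
      unfolding Pv by (intro arg_cong2[where f="(/)"] sum.cong refl)
        (simp add: R_def reach_eq_of_ker[OF Lz])
    also have "\<dots> = z$i"
    proof -
      have "card (R i) \<noteq> 0" using card_R_pos[of i] by linarith
      then show ?thesis by simp
    qed
    finally show ?thesis using Pz by simp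
  qed
  then show ?thesis by (simp add: vec_eq_iff)
qed

lemma exists_M: "\<exists>M. M ** (L + P) = mat 1 \<and> (L + P) ** M = mat 1"
  using ker_LP matrix_left_invertible_ker[of "L + P"] matrix_left_right_inverse by blast

definition M where "M = (SOME M. M ** (L + P) = mat 1 \<and> (L + P) ** M = mat 1)"

lemma M: "M ** (L + P) = mat 1" "(L + P) ** M = mat 1"
  using someI_ex[OF exists_M] unfolding M_def by auto

lemma Mv1: "M *v (L *v x) + M *v (P *v x) = x"
  using arg_cong[OF M(1), of "\<lambda>A. A *v x"]
  by (simp add: matrix_vector_mul_assoc[symmetric] algebra_simps)
lemma Mv2: "L *v (M *v x) + P *v (M *v x) = x"
  using arg_cong[OF M(2), of "\<lambda>A. A *v x"]
  by (simp add: matrix_vector_mul_assoc[symmetric] algebra_simps)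

lemma MPv: "M *v (P *v x) = P *v x"
  using Mv1[of "P *v x"] by (simp add: LPv PPv)
lemma PMv: "P *v (M *v x) = P *v x"
proof -
  have "P *v (L *v (M *v x) + P *v (M *v x)) = P *v x" using Mv2 by simp
  then show ?thesis by (simp add: algebra_simps PLv PPv)
qed
lemma MLv: "M *v (L *v x) = x - P *v x"
  using Mv1[of x] by (simp add: MPv algebra_simps)
lemma LMv: "L *v (M *v x) = x - P *v x"
  using Mv2[of x] by (simp add: PMv algebra_simps)

definition X where "X = M - P"

lemma Xv: "X *v x = M *v x - P *v x"
  by (simp add: X_def algebra_simps)

lemma LXv: "L *v (X *v x) = x - P *v x"
  by (simp add: Xv algebra_simps LMv PPv LPv)
lemma PXv: "P *v (X *v x) = 0"
  by (simp add: Xv algebra_simps PMv PPv)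
lemma XPv: "X *v (P *v x) = 0"
  by (simp add: Xv MPv PPv)
lemma XLv: "X *v (L *v x) = x - P *v x"
  by (simp add: Xv algebra_simps MLv PLv)

lemma LX: "L ** X = mat 1 - P"
  unfolding matrix_eq by (simp add: matrix_vector_mul_assoc[symmetric] LXv algebra_simps)
lemma XL: "X ** L = mat 1 - P"
  unfolding matrix_eq by (simp add: matrix_vector_mul_assoc[symmetric] XLv algebra_simps)

lemma transpose_IP: "transpose (mat 1 - P) = mat 1 - P"
proof -
  have "P $ j $ i = P $ i $ j" for i j
    using P_sym unfolding transpose_def vec_eq_iff by auto
  then show ?thesis unfolding transpose_def mat_def by (simp add: vec_eq_iff)
qed

lemma penrose_X:
  "L ** X ** L = L \<and> X ** L ** X = X \<and> transpose (L ** X) = L ** X \<and> transpose (X ** L) = X ** L"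
proof (intro conjI)
  show "L ** X ** L = L"
    unfolding matrix_eq by (simp add: matrix_vector_mul_assoc[symmetric] LXv algebra_simps PLv)
  show "X ** L ** X = X"
    unfolding matrix_eq by (simp add: matrix_vector_mul_assoc[symmetric] LXv algebra_simps XPv)
  show "transpose (L ** X) = L ** X" by (simp add: LX transpose_IP)
  show "transpose (X ** L) = X ** L" by (simp add: XL transpose_IP)
qed

lemma pinv_L: "pinv L = X"
  unfolding pinv_def
proof (rule the_equality)
  show "L ** X ** L = L \<and> X ** L ** X = X \<and> transpose (L ** X) = L ** X \<and> transpose (X ** L) = X ** L"
    by (rule penrose_X)
  fix Y assume "L ** Y ** L = L \<and> Y ** L ** Y = Y \<and> transpose (L ** Y) = L ** Y \<and> transpose (Y ** L) = Y ** L"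
  then show "Y = X" using penrose_X penrose_unique[of L X Y] by blast
qed

lemma X_sym: "transpose X = X"
proof -
  have t: "transpose L = L" by (rule L_sym)
  have p: "L ** X ** L = L" "X ** L ** X = X" "transpose (L ** X) = L ** X" "transpose (X ** L) = X ** L"
    using penrose_X by auto
  have "L ** transpose X ** L = L"
    using arg_cong[OF p(1), of transpose] by (simp add: matrix_transpose_mul t matrix_mul_assoc)
  moreover have "transpose X ** L ** transpose X = transpose X"
    using arg_cong[OF p(2), of transpose] by (simp add: matrix_transpose_mul t matrix_mul_assoc)
  moreover have "L ** transpose X = X ** L"
    using p(4) by (simp add: matrix_transpose_mul t)
  moreover have "transpose X ** L = L ** X"
    using p(3) by (simp add: matrix_transpose_mul t)
  ultimately show ?thesis
    using penrose_unique[of L X "transpose X"] p by (simp add: matrix_transpose_mul t)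
qed


definition en :: "'n set \<Rightarrow> real^'n \<Rightarrow> real" where
  "en C z = (\<Sum>i\<in>C. \<Sum>j\<in>C. if E i j then (z$i - z$j)^2 else 0)"

lemma en_nonneg: "en C z \<ge> 0"
  unfolding en_def by (intro sum_nonneg) auto

lemma en_set: "en C z = (\<Sum>q\<in>{q \<in> C \<times> C. E (fst q) (snd q)}. (z$(fst q) - z$(snd q))^2)"
proof -
  have "en C z = (\<Sum>q\<in>C \<times> C. if E (fst q) (snd q) then (z$(fst q) - z$(snd q))^2 else 0)"
    unfolding en_def by (simp add: sum.cartesian_product case_prod_beta)
  also have "\<dots> = (\<Sum>q\<in>{q \<in> C \<times> C. E (fst q) (snd q)}. (z$(fst q) - z$(snd q))^2)"
    by (rule sum.inter_filter[symmetric]) simp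
  finally show ?thesis .
qed

lemma path_bound:
  assumes "reach a b"
  shows "2 * (z$a - z$b)^2 \<le> (real (card (R a)) - 1) * en (R a) z"
proof -
  obtain xs where "rtrancl_path E a xs b" using assms rtranclp_eq_rtrancl_path unfolding reach_def by metis
  then obtain ps where pth: "rtrancl_path E a ps b" and dist: "distinct (a # ps)"
    using rtrancl_path_distinct by metis
  define p where "p = a # ps"
  define m where "m = length ps"
  have lenp: "length p = Suc m" by (simp add: p_def m_def)
  have edge: "\<And>i. i < m \<Longrightarrow> E (p!i) (p!Suc i)" and lastp: "p!m = b"
    using rtrancl_path_nth[OF pth] unfolding p_def m_def by auto
  have p0: "p!0 = a" by (simp add: p_def)
  have reachp: "i \<le> m \<Longrightarrow> reach a (p!i)" for i
  proof (induct i)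
    case 0 then show ?case by (simp add: p0 reach_refl)
  next
    case (Suc i) then show ?case using edge[of i] reach_step by simp
  qed
  have inR: "i \<le> m \<Longrightarrow> p!i \<in> R a" for i using reachp by (simp add: R_def)
  have setp: "set p \<subseteq> R a"
  proof
    fix v assume "v \<in> set p"
    then obtain i where "i < length p" "p!i = v" by (auto simp: in_set_conv_nth)
    then show "v \<in> R a" using inR[of i] lenp by auto
  qed
  have distp: "distinct p" using dist by (simp add: p_def)
  have "Suc m \<le> card (R a)"
    using card_mono[OF finite setp] distinct_card[OF distp] lenp by simp
  then have mle: "real m \<le> real (card (R a)) - 1" by linarith
  define d where "d i = z$(p!i) - z$(p!Suc i)" for i
  have tel: "(\<Sum>i<m. d i) = z$a - z$b"
    unfolding d_def using sum_lessThan_telescope'[of "\<lambda>i. z$(p!i)" m] p0 lastp by simp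
  have cs: "(\<Sum>i<m. d i)^2 \<le> (\<Sum>i<m. (d i)^2) * real m"
    using sum_squared_le_sum_of_squares[of d "{..<m}"] by simp
  define g where "g q = (z$(fst q) - z$(snd q))^2" for q :: "'n \<times> 'n"
  define e where "e i = (p!i, p!Suc i)" for i
  define e' where "e' i = (p!Suc i, p!i)" for i
  have nth_inj: "i \<le> m \<Longrightarrow> j \<le> m \<Longrightarrow> p!i = p!j \<Longrightarrow> i = j" for i j
    using nth_eq_iff_index_eq[OF distp, of i j] lenp by simp
  have inj_e: "inj_on e {..<m}" unfolding inj_on_def e_def using nth_inj by auto
  have inj_e': "inj_on e' {..<m}" unfolding inj_on_def e'_def using nth_inj by auto
  have disj: "e ` {..<m} \<inter> e' ` {..<m} = {}"
  proof (rule ccontr)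
    assume "e ` {..<m} \<inter> e' ` {..<m} \<noteq> {}"
    then obtain i j where ij: "i < m" "j < m" "e i = e' j" by blast
    then have "p!i = p!Suc j" "p!Suc i = p!j" by (auto simp: e_def e'_def)
    then have "i = Suc j" "Suc i = j" using nth_inj ij by auto
    then show False by simp
  qed
  have s1: "(\<Sum>q\<in>e ` {..<m}. g q) = (\<Sum>i<m. (d i)^2)"
    unfolding sum.reindex[OF inj_e] by (simp add: g_def e_def d_def)
  have s2: "(\<Sum>q\<in>e' ` {..<m}. g q) = (\<Sum>i<m. (d i)^2)"
    unfolding sum.reindex[OF inj_e'] by (simp add: g_def e'_def d_def power2_commute)
  have sub: "e ` {..<m} \<union> e' ` {..<m} \<subseteq> {q \<in> R a \<times> R a. E (fst q) (snd q)}"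
    using inR edge by (auto simp: e_def e'_def intro: symE)
  have "2 * (\<Sum>i<m. (d i)^2) = (\<Sum>q\<in>e ` {..<m} \<union> e' ` {..<m}. g q)"
    by (subst sum.union_disjoint) (use disj s1 s2 in auto)
  also have "\<dots> \<le> (\<Sum>q\<in>{q \<in> R a \<times> R a. E (fst q) (snd q)}. g q)"
    by (rule sum_mono2) (use sub in \<open>auto simp: g_def\<close>)
  also have "\<dots> = en (R a) z" by (simp add: en_set g_def)
  finally have edges: "2 * (\<Sum>i<m. (d i)^2) \<le> en (R a) z" .
  have "2 * (z$a - z$b)^2 \<le> 2 * ((\<Sum>i<m. (d i)^2) * real m)"
    using cs tel by simp
  also have "\<dots> = real m * (2 * (\<Sum>i<m. (d i)^2))" by simp
  also have "\<dots> \<le> real m * en (R a) z" by (rule mult_left_mono[OF edges]) simp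
  also have "\<dots> \<le> (real (card (R a)) - 1) * en (R a) z"
    by (rule mult_right_mono[OF mle en_nonneg])
  finally show ?thesis .
qed


lemma main_bound:
  fixes x y :: "real^'n"
  assumes x: "x = indic s - indic t" and Py: "P *v y = 0" and Ly: "L *v y = x - P *v x"
  shows "(y$u)^2 \<le> (real (card (R u)) - 1)^2"
proof -
  define C where "C = R u"
  define k where "k = real (card C)"
  have cpos: "card C \<noteq> 0" using card_R_pos[of u] unfolding C_def by linarith
  have k1: "k - 1 \<ge> 0" proof - have "card C \<ge> 1" using cpos by linarith then show ?thesis unfolding k_def by simp qed
  have RC: "w \<in> C \<Longrightarrow> R w = C" for w unfolding C_def by (rule R_eq[symmetric]) (simp add: R_def)
  have sumC: "(\<Sum>i\<in>C. y$i) = 0"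
    using arg_cong[OF Py, of "\<lambda>v. v$u"] cpos unfolding Pv C_def by simp
  have vb: "2 * (y$w)^2 \<le> (k - 1) * en C y" if w: "w \<in> C" for w
  proof -
    obtain v where v: "v \<in> C" "(y$w)^2 \<le> (y$w - y$v)^2"
      using sign_lemma[OF finite w sumC] by blast
    have "reach w v" using v(1) RC[OF w] unfolding R_def by blast
    from path_bound[OF this, of y] have "2 * (y$w - y$v)^2 \<le> (k - 1) * en C y"
      using RC[OF w] unfolding k_def by simp
    then show ?thesis using v(2) by linarith
  qed
  have closed: "\<forall>i\<in>C. \<forall>j. E i j \<longrightarrow> j \<in> C" unfolding C_def using R_closed by blast
  have "2 * (\<Sum>i\<in>C. y$i * (L *v y) $ i) = en C y"
    using energy_closed[OF closed, of y] unfolding en_def by simp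
  moreover have "(\<Sum>i\<in>C. y$i * (L *v y) $ i) = (\<Sum>i\<in>C. y$i * x$i) - (\<Sum>i\<in>C. y$i * (P *v x)$u)"
  proof -
    have "(\<Sum>i\<in>C. y$i * (L *v y) $ i) = (\<Sum>i\<in>C. y$i * x$i - y$i * (P *v x)$i)"
      by (simp add: Ly algebra_simps)
    also have "\<dots> = (\<Sum>i\<in>C. y$i * x$i - y$i * (P *v x)$u)"
      by (intro sum.cong refl) (simp add: C_def R_def Pv_const)
    finally show ?thesis by (simp add: sum_subtractf)
  qed
  moreover have "(\<Sum>i\<in>C. y$i * (P *v x)$u) = 0"
    using sumC by (simp add: sum_distrib_right[symmetric])
  moreover have "(\<Sum>i\<in>C. y$i * x$i) = (if s \<in> C then y$s else 0) - (if t \<in> C then y$t else 0)"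
  proof -
    have "(\<Sum>i\<in>C. y$i * x$i) = (\<Sum>i\<in>C. (if i = s then y$i else 0) - (if i = t then y$i else 0))"
      by (intro sum.cong refl) (simp add: x indic_def)
    also have "\<dots> = (if s \<in> C then y$s else 0) - (if t \<in> C then y$t else 0)"
      by (simp add: sum_subtractf sum.delta' [OF finite])
    finally show ?thesis .
  qed
  ultimately have Q: "en C y = 2 * ((if s \<in> C then y$s else 0) - (if t \<in> C then y$t else 0))"
    by simp
  define Q where "Q = en C y"
  have Q0: "Q \<ge> 0" unfolding Q_def by (rule en_nonneg)
  have QQ: "2 * (Q/2)^2 \<le> (k - 1) * Q"
  proof (cases "s \<in> C")
    case sC: True
    show ?thesis
    proof (cases "t \<in> C")
      case tC: True
      have "reach s t" using sC tC unfolding C_def R_def using reach_sym reach_trans by blast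
      from path_bound[OF this, of y] have h: "2 * (y$s - y$t)^2 \<le> (k - 1) * en C y"
        using RC[OF sC] unfolding k_def by simp
      have eq: "Q/2 = y$s - y$t" using Q sC tC unfolding Q_def by simp
      show ?thesis using h unfolding Q_def[symmetric] eq[symmetric] .
    next
      case tC: False
      have eq: "Q/2 = y$s" using Q sC tC unfolding Q_def by simp
      show ?thesis using vb[OF sC] unfolding Q_def[symmetric] eq[symmetric] .
    qed
  next
    case sC: False
    show ?thesis
    proof (cases "t \<in> C")
      case tC: True
      have eq: "Q/2 = - y$t" using Q sC tC unfolding Q_def by simp
      have "(y$t)^2 = (- y$t)^2" by simp
      then show ?thesis using vb[OF tC] unfolding Q_def[symmetric] eq[symmetric] by simp
    next
      case tC: False
      show ?thesis using Q sC tC unfolding Q_def by simp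
    qed
  qed
  have Qle: "Q \<le> 2 * (k - 1)"
  proof (cases "Q = 0")
    case True then show ?thesis using k1 by simp
  next
    case False
    then have Qp: "Q > 0" using Q0 by simp
    have "Q * Q \<le> (2 * (k - 1)) * Q" using QQ by (simp add: power2_eq_square field_simps)
    then show ?thesis using Qp by (simp add: mult_le_cancel_right_pos)
  qed
  have "2 * (y$u)^2 \<le> (k - 1) * Q" using vb[of u] unfolding Q_def C_def by (simp add: in_R)
  also have "\<dots> \<le> (k - 1) * (2 * (k - 1))" by (rule mult_left_mono[OF Qle k1])
  finally have "(y$u)^2 \<le> (k - 1)^2" by (simp add: power2_eq_square algebra_simps)
  then show ?thesis unfolding k_def C_def .
qed

end

theorem theoremA2:
  fixes E :: "'n::finite \<Rightarrow> 'n \<Rightarrow> bool" and s t :: 'n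
  assumes "simple_graph E"
  shows "(biharmonic_dist E s t)\<^sup>2 \<le> real (CARD('n)) ^ 3"
proof -
  interpret G: sgraph E using assms unfolding simple_graph_def by unfold_locales blast
  define x where "x = indic s - indic t"
  define y where "y = G.X *v x"
  have dot: "x \<bullet> (G.X *v w) = y \<bullet> w" for w
  proof -
    have "x \<bullet> (G.X *v w) = (x v* G.X) \<bullet> w" by (simp add: dot_lmul_matrix)
    also have "x v* G.X = transpose G.X *v x" by simp
    also have "\<dots> = y" by (simp add: G.X_sym y_def)
    finally show ?thesis .
  qed
  have val: "x \<bullet> ((G.X ** G.X) *v x) = y \<bullet> y"
    by (simp add: matrix_vector_mul_assoc[symmetric] dot y_def)
  have bd: "biharmonic_dist E s t = sqrt (y \<bullet> y)"
    unfolding biharmonic_dist_def Let_def G.pinv_L x_def[symmetric] val ..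
  have Py: "G.P *v y = 0" unfolding y_def by (rule G.PXv)
  have Ly: "laplacian E *v y = x - G.P *v x" unfolding y_def by (rule G.LXv)
  have each: "(y$u)^2 \<le> (real CARD('n))^2" for u
  proof -
    have b: "(y$u)^2 \<le> (real (card (G.R u)) - 1)^2"
      by (rule G.main_bound[OF x_def Py Ly])
    have c1: "card (G.R u) \<le> CARD('n)" by (rule card_mono) auto
    have c0: "card (G.R u) > 0" by (rule G.card_R_pos)
    have "(real (card (G.R u)) - 1)^2 \<le> (real CARD('n))^2"
      using c1 c0 by (intro power_mono) auto
    then show ?thesis using b by linarith
  qed
  have "y \<bullet> y = (\<Sum>u\<in>UNIV. (y$u)^2)" by (simp add: inner_vec_def power2_eq_square)
  also have "\<dots> \<le> (\<Sum>u\<in>(UNIV::'n set). (real CARD('n))^2)" by (rule sum_mono) (rule each)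
  also have "\<dots> = real CARD('n) ^ 3" by (simp add: power_def)
  finally have yy: "y \<bullet> y \<le> real CARD('n) ^ 3" .
  have "y \<bullet> y \<ge> 0" by simp
  then show ?thesis using yy bd by simp
qed

end
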